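(* Let $\mathbf a\in\mathbb N^{L+1}$ be an architecture with width $W$ and depth $L$, and $R>0$ a parameter bound such that \[\inf_{f\in\mathcal{NN}(\mathbf a,W,L,R)}\|f-\eta\|_{L^\infty(\rho_X)}\le\varepsilon\] for some $\varepsilon\ge0$. Then for any $\lambda\ge0$, any minimizer $\boldsymbol\theta_\lambda$ of the regularized population risk $\mathcal R_{\ell,\lambda}$ over $\mathcal P_{\mathbf a,R}$ satisfies \[\|f(\cdot;\boldsymbol\theta_\lambda)-\eta\|_{L^2(\rho_X)}\le\varepsilon+\sqrt{\tfrac\lambda2P(\mathbf a)R^p}.\]
   Context: Setting: $\mathcal X=[0,1]^d$, $\rho$ a probability distribution on $\mathcal X\times\{-1,1\}$ with $X$-marginal $\rho_X$, $(X,Y)\sim\rho$, $\eta(x)=\mathbb E[Y\mid X=x]$. Networks: $\sigma(t)=\max\{0,t\}$; architecture $\mathbf a=(a_0,\dots,a_L)$, $a_0=d$, $a_L=1$, width $W=\max_la_l$, $P(\mathbf a)=\sum_{l=1}^L(a_la_{l-1}+a_l)$; parametrization $\boldsymbol\theta=((W_l,B_l))_{l=1}^L$, $W_l\in\mathbb R^{a_l\times a_{l-1}}$, $B_l\in\mathbb R^{a_l}$; $|\boldsymbol\theta|_p^p$ is the sum of $p$-th powers of absolute entries; $\mathcal P_{\mathbf a,R}$ is the set of parametrizations with entries in $[-R,R]$. Realization $f(x;\boldsymbol\theta)=\operatorname{clip}_1(T_L\circ\sigma\circ\cdots\circ\sigma\circ T_1(x))$, $T_l(z)=W_lz+B_l$,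 $\operatorname{clip}_1(t)=\max(-1,\min(1,t))$; $\mathcal{NN}(\mathbf a,W,L,R)=\{f(\cdot;\boldsymbol\theta)|_{\mathcal X}:\boldsymbol\theta\in\mathcal P_{\mathbf a,R}\}$. Fix $0<p<\infty$; $\mathcal R_{\ell,\lambda}(\boldsymbol\theta)=\mathbb E[(f(X;\boldsymbol\theta)-Y)^2]+\frac\lambda2|\boldsymbol\theta|_p^p$. *)

theory Defs
  imports "HOL-Probability.Probability"
begin

text \<open>Inputs x in [0,1]^d are represented as functions nat => real whose
coordinates i < d lie in [0,1] and whose coordinates i >= d vanish. A parametrization is the list
[(W_1,B_1), ..., (W_L,B_L)] with W_l :: nat => nat => real (entry (i,j) relevant
for i < a_l, j < a_(l-1)) and B_l :: nat => real (entry i relevant for i < a_l).\<close>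

type_synonym layer_param = "(nat \<Rightarrow> nat \<Rightarrow> real) \<times> (nat \<Rightarrow> real)"

definition cube :: "nat \<Rightarrow> (nat \<Rightarrow> real) set" where
  "cube d = {x. (\<forall>i<d. 0 \<le> x i \<and> x i \<le> 1) \<and> (\<forall>i\<ge>d. x i = 0)}"

definition is_architecture :: "nat \<Rightarrow> nat list \<Rightarrow> bool" where
  "is_architecture d a \<longleftrightarrow> length a \<ge> 2 \<and> a ! 0 = d \<and> last a = 1"

definition depth :: "nat list \<Rightarrow> nat" where
  "depth a = length a - 1"

definition width :: "nat list \<Rightarrow> nat" where
  "width a = Max (set a)"

definition num_params :: "nat list \<Rightarrow> nat" where
  "num_params a = (\<Sum>l\<in>{1..depth a}. a ! l * a ! (l - 1) + a ! l)"

definition relu :: "real \<Rightarrow> real" where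
  "relu t = max 0 t"

definition clip1 :: "real \<Rightarrow> real" where
  "clip1 t = max (-1) (min 1 t)"

definition affine :: "nat \<Rightarrow> nat \<Rightarrow> layer_param \<Rightarrow> (nat \<Rightarrow> real) \<Rightarrow> (nat \<Rightarrow> real)" where
  "affine n m p z = (\<lambda>i. if i < n then (\<Sum>j<m. fst p i j * z j) + snd p i else 0)"

fun net_pre :: "nat list \<Rightarrow> layer_param list \<Rightarrow> (nat \<Rightarrow> real) \<Rightarrow> (nat \<Rightarrow> real)" where
  "net_pre (m # n # as) [p] z = affine n m p z"
| "net_pre (m # n # as) (p # q # ps) z =
     net_pre (n # as) (q # ps) (\<lambda>i. relu (affine n m p z i))"
| "net_pre _ _ z = z"

definition realization :: "nat list \<Rightarrow> layer_param list \<Rightarrow> (nat \<Rightarrow> real) \<Rightarrow> real" where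
  "realization a \<theta> x = clip1 (net_pre a \<theta> x 0)"

definition param_set :: "nat list \<Rightarrow> real \<Rightarrow> layer_param list set" where
  "param_set a R = {\<theta>. length \<theta> = depth a \<and>
     (\<forall>l<depth a. (\<forall>i<a ! (l+1). \<forall>j<a ! l. \<bar>fst (\<theta> ! l) i j\<bar> \<le> R) \<and>
                  (\<forall>i<a ! (l+1). \<bar>snd (\<theta> ! l) i\<bar> \<le> R))}"

definition param_pnorm_pow :: "real \<Rightarrow> nat list \<Rightarrow> layer_param list \<Rightarrow> real" where
  "param_pnorm_pow p a \<theta> = (\<Sum>l<depth a.
       (\<Sum>i<a ! (l+1). \<Sum>j<a ! l. \<bar>fst (\<theta> ! l) i j\<bar> powr p)
     + (\<Sum>i<a ! (l+1). \<bar>snd (\<theta> ! l) i\<bar> powr p))"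

text \<open>NN(a, W, L, R) (W = width a and L = depth a are determined by a).\<close>
definition NN :: "nat list \<Rightarrow> nat \<Rightarrow> nat \<Rightarrow> real \<Rightarrow> ((nat \<Rightarrow> real) \<Rightarrow> real) set" where
  "NN a W L R = (if W = width a \<and> L = depth a
      then realization a ` param_set a R else {})"

definition marginal :: "((nat \<Rightarrow> real) \<times> real) measure \<Rightarrow> (nat \<Rightarrow> real) measure" where
  "marginal \<rho> = distr \<rho> borel fst"

definition is_regression_fun ::
  "((nat \<Rightarrow> real) \<times> real) measure \<Rightarrow> ((nat \<Rightarrow> real) \<Rightarrow> real) \<Rightarrow> bool" where
  "is_regression_fun \<rho> \<eta> \<longleftrightarrow> \<eta> \<in> borel_measurable borel \<and>
     (\<forall>A \<in> sets borel. (\<integral>z. indicator A (fst z) * snd z \<partial>\<rho>)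
                       = (\<integral>x. indicator A x * \<eta> x \<partial>marginal \<rho>))"

definition Linf_dist :: "(nat \<Rightarrow> real) measure \<Rightarrow> ((nat \<Rightarrow> real) \<Rightarrow> real) \<Rightarrow> ((nat \<Rightarrow> real) \<Rightarrow> real) \<Rightarrow> ereal" where
  "Linf_dist \<mu> f g = esssup \<mu> (\<lambda>x. ereal \<bar>f x - g x\<bar>)"

definition L2_dist :: "(nat \<Rightarrow> real) measure \<Rightarrow> ((nat \<Rightarrow> real) \<Rightarrow> real) \<Rightarrow> ((nat \<Rightarrow> real) \<Rightarrow> real) \<Rightarrow> real" where
  "L2_dist \<mu> f g = sqrt (\<integral>x. (f x - g x)\<^sup>2 \<partial>\<mu>)"

definition reg_risk :: "((nat \<Rightarrow> real) \<times> real) measure \<Rightarrow> real \<Rightarrow> real \<Rightarrow> nat list \<Rightarrow> layer_param list \<Rightarrow> real" where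
  "reg_risk \<rho> p lam a \<theta> = (\<integral>z. (realization a \<theta> (fst z) - snd z)\<^sup>2 \<partial>\<rho>)
      + lam / 2 * param_pnorm_pow p a \<theta>"

end

theory Submission
  imports Defs
begin

lemma fst_snd_meas:
  fixes \<rho> :: "('a::topological_space \<times> real) measure"
  assumes "sets \<rho> = sets borel"
  shows "fst \<in> \<rho> \<rightarrow>\<^sub>M borel" "snd \<in> borel_measurable \<rho>"
proof -
  have "fst \<in> (borel :: ('a \<times> real) measure) \<rightarrow>\<^sub>M borel"
    by (intro borel_measurable_continuous_onI continuous_on_fst continuous_on_id)
  then show "fst \<in> \<rho> \<rightarrow>\<^sub>M borel" using measurable_cong_sets[OF assms refl] by blast
  have "snd \<in> (borel :: ('a \<times> real) measure) \<rightarrow>\<^sub>M borel"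
    by (intro borel_measurable_continuous_onI continuous_on_snd continuous_on_id)
  then show "snd \<in> borel_measurable \<rho>" using measurable_cong_sets[OF assms refl] by blast
qed

lemma integrable_mult_AE_bdd:
  fixes f g :: "'a \<Rightarrow> real"
  assumes "integrable M f" "g \<in> borel_measurable M" "AE x in M. \<bar>g x\<bar> \<le> C"
  shows "integrable M (\<lambda>x. f x * g x)"
proof -
  have i: "integrable M (\<lambda>x. C * f x)" using assms by auto
  show ?thesis
  proof (rule Bochner_Integration.integrable_bound[OF i])
    show "(\<lambda>x. f x * g x) \<in> borel_measurable M" using assms by auto
    show "AE x in M. norm (f x * g x) \<le> norm (C * f x)"
      using assms(3)
    proof eventually_elim
      case (elim x)
      then show ?case by (simp add: abs_mult) (metis abs_ge_zero abs_le_D1 dual_order.trans mult.commute mult_right_mono)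
    qed
  qed
qed

lemma key:
  fixes \<rho> :: "('a::topological_space \<times> real) measure" and \<eta> :: "'a \<Rightarrow> real"
  assumes sets: "sets \<rho> = sets borel"
    and Y: "AE z in \<rho>. \<bar>snd z\<bar> \<le> 1"
    and etam: "\<eta> \<in> borel_measurable borel"
    and etab: "AE x in distr \<rho> borel fst. \<bar>\<eta> x\<bar> \<le> C"
    and cond: "\<forall>A \<in> sets borel. (\<integral>z. indicator A (fst z) * snd z \<partial>\<rho>)
                       = (\<integral>x. indicator A x * \<eta> x \<partial>distr \<rho> borel fst)"
    and h: "integrable (distr \<rho> borel fst) h"
  shows "(\<integral>z. h (fst z) * snd z \<partial>\<rho>) = (\<integral>x. h x * \<eta> x \<partial>distr \<rho> borel fst)"
  using h
proof (induction rule: integrable_induct)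
  case (base A c)
  have A: "A \<in> sets borel" using base by simp
  have "(\<integral>z. (indicator A (fst z) *\<^sub>R c) * snd z \<partial>\<rho>) = (\<integral>z. indicator A (fst z) * snd z \<partial>\<rho>) * c"
    by (simp add: mult_ac)
  also have "\<dots> = (\<integral>x. indicator A x * \<eta> x \<partial>distr \<rho> borel fst) * c" using cond A by simp
  also have "\<dots> = (\<integral>x. (indicator A x *\<^sub>R c) * \<eta> x \<partial>distr \<rho> borel fst)"
    by (simp add: mult_ac)
  finally show ?case .
next
  case (add f g)
  have intfg: "integrable (distr \<rho> borel fst) f" "integrable (distr \<rho> borel fst) g"
    using add by auto
  have fm[measurable]: "fst \<in> \<rho> \<rightarrow>\<^sub>M borel" and sm[measurable]: "snd \<in> borel_measurable \<rho>"
    using fst_snd_meas[OF sets] by auto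
  have em: "\<eta> \<in> borel_measurable (distr \<rho> borel fst)" using etam by simp
  have fb: "f \<in> borel_measurable borel" "g \<in> borel_measurable borel"
    using borel_measurable_integrable[OF intfg(1)] borel_measurable_integrable[OF intfg(2)] by auto
  have i1: "integrable \<rho> (\<lambda>z. f (fst z) * snd z)" "integrable \<rho> (\<lambda>z. g (fst z) * snd z)"
  proof -
    have "integrable \<rho> (\<lambda>z. f (fst z))" "integrable \<rho> (\<lambda>z. g (fst z))"
      using intfg integrable_distr_eq[OF fm fb(1)] integrable_distr_eq[OF fm fb(2)] by auto
    then show "integrable \<rho> (\<lambda>z. f (fst z) * snd z)" "integrable \<rho> (\<lambda>z. g (fst z) * snd z)"
      using integrable_mult_AE_bdd[OF _ sm Y] by auto
  qed
  have i2: "integrable (distr \<rho> borel fst) (\<lambda>x. f x * \<eta> x)" "integrable (distr \<rho> borel fst) (\<lambda>x. g x * \<eta> x)"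
    using intfg integrable_mult_AE_bdd[OF _ em etab] by auto
  show ?case using add i1 i2 by (simp add: distrib_right)
next
  case (lim f s)
  have intf: "integrable (distr \<rho> borel fst) f" using lim by blast
  have conv: "(\<lambda>i. s i x) \<longlonglongrightarrow> f x" for x using lim by simp
  have bnd: "\<bar>s i x\<bar> \<le> 2 * \<bar>f x\<bar>" for i x using lim by simp
  have fm[measurable]: "fst \<in> \<rho> \<rightarrow>\<^sub>M borel" and sm[measurable]: "snd \<in> borel_measurable \<rho>"
    using fst_snd_meas[OF sets] by auto
  have em: "\<eta> \<in> borel_measurable (distr \<rho> borel fst)" using etam by simp
  have fb[measurable]: "f \<in> borel_measurable borel" using intf by (auto dest: borel_measurable_integrable)
  have sb[measurable]: "s i \<in> borel_measurable borel" for i using lim(1)[of i] by (auto dest: borel_measurable_integrable)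
  have sp: "space \<rho> = UNIV" using sets_eq_imp_space_eq[OF sets] by simp
  have L1: "(\<lambda>i. \<integral>z. s i (fst z) * snd z \<partial>\<rho>) \<longlonglongrightarrow> (\<integral>z. f (fst z) * snd z \<partial>\<rho>)"
  proof (rule integral_dominated_convergence[where w="\<lambda>z. 2 * \<bar>f (fst z)\<bar>"])
    show "integrable \<rho> (\<lambda>z. 2 * \<bar>f (fst z)\<bar>)"
      using intf integrable_distr_eq[OF fm fb] by auto
    show "AE x in \<rho>. (\<lambda>i. s i (fst x) * snd x) \<longlonglongrightarrow> f (fst x) * snd x"
      using conv by (auto intro!: tendsto_intros)
    show "AE x in \<rho>. norm (s i (fst x) * snd x) \<le> 2 * \<bar>f (fst x)\<bar>" for i
      using Y
    proof eventually_elim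
      case (elim z)
      have "\<bar>s i (fst z)\<bar> \<le> 2 * \<bar>f (fst z)\<bar>" using bnd[of i "fst z"] by simp
      then show ?case using elim mult_mono[of "\<bar>s i (fst z)\<bar>" "2 * \<bar>f (fst z)\<bar>" "\<bar>snd z\<bar>" 1] by (simp add: abs_mult)
    qed
  qed auto
  have L2: "(\<lambda>i. \<integral>x. s i x * \<eta> x \<partial>distr \<rho> borel fst) \<longlonglongrightarrow> (\<integral>x. f x * \<eta> x \<partial>distr \<rho> borel fst)"
  proof (rule integral_dominated_convergence[where w="\<lambda>x. 2 * \<bar>f x\<bar> * C"])
    show "integrable (distr \<rho> borel fst) (\<lambda>x. 2 * \<bar>f x\<bar> * C)"
      using intf by auto
    show "AE x in distr \<rho> borel fst. (\<lambda>i. s i x * \<eta> x) \<longlonglongrightarrow> f x * \<eta> x"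
      using conv by (auto intro!: tendsto_intros)
    show "AE x in distr \<rho> borel fst. norm (s i x * \<eta> x) \<le> 2 * \<bar>f x\<bar> * C" for i
      using etab
    proof eventually_elim
      case (elim x)
      have "\<bar>s i x\<bar> \<le> 2 * \<bar>f x\<bar>" using bnd[of i x] by simp
      then show ?case using elim by (simp add: abs_mult mult_mono)
    qed
  qed (use em in auto)
  show ?case using LIMSEQ_unique[OF L1] L2 lim by simp
qed


lemma net_pre_meas:
  "(\<And>i. (\<lambda>x. z x i) \<in> borel_measurable M) \<Longrightarrow> (\<lambda>x. net_pre a \<theta> (z x) i) \<in> borel_measurable M"
proof (induction \<theta> arbitrary: a z i)
  case Nil
  then show ?case by simp
next
  case (Cons p ps)
  show ?case
  proof (cases "\<exists>m n as. a = m # n # as")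
    case False
    then have "a = [] \<or> (\<exists>m. a = [m])" by (metis list.exhaust)
    then have "net_pre a (p # ps) w = w" for w by auto
    then show ?thesis using Cons.prems by simp
  next
    case True
    then obtain m n as where a: "a = m # n # as" by blast
    show ?thesis
    proof (cases ps)
      case Nil
      then show ?thesis using Cons.prems by (simp add: a affine_def)
    next
      case (Cons q qs)
      have "(\<lambda>x. relu (affine n m p (z x) j)) \<in> borel_measurable M" for j
        using Cons.prems by (simp add: affine_def relu_def)
      then show ?thesis using Cons.IH[of "\<lambda>x j. relu (affine n m p (z x) j)" "n # as"]
        by (simp add: a Cons)
    qed
  qed
qed

lemma realization_meas: "realization a \<theta> \<in> borel_measurable borel"
proof -
  have "(\<lambda>x::nat\<Rightarrow>real. x i) \<in> borel_measurable borel" for i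
    by (rule borel_measurable_continuous_onI) simp
  then have "(\<lambda>x. net_pre a \<theta> x 0) \<in> borel_measurable borel"
    using net_pre_meas[where z="\<lambda>x. x" and M=borel and a=a and \<theta>=\<theta> and i=0] by simp
  then show ?thesis unfolding realization_def clip1_def by simp
qed

lemma realization_bnd: "\<bar>realization a \<theta> x\<bar> \<le> 1"
  by (simp add: realization_def clip1_def)

lemma sum_shift1: "(\<Sum>l\<in>{1..n}. g l) = (\<Sum>l<n. g (Suc l))"
  by (induction n) (auto simp: atLeastAtMostSuc_conv add.commute)

lemma pnorm_bounds:
  assumes "\<theta> \<in> param_set a R" "p > 0"
  shows "0 \<le> param_pnorm_pow p a \<theta>" "param_pnorm_pow p a \<theta> \<le> real (num_params a) * R powr p"
proof -
  show "0 \<le> param_pnorm_pow p a \<theta>" unfolding param_pnorm_pow_def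
    by (intro sum_nonneg add_nonneg_nonneg) auto
  have B: "\<bar>t\<bar> \<le> R \<Longrightarrow> \<bar>t\<bar> powr p \<le> R powr p" for t
    using assms(2) by (simp add: powr_mono2)
  have "param_pnorm_pow p a \<theta> \<le> (\<Sum>l<depth a. real (a ! (l+1) * a ! l + a ! (l+1)) * R powr p)"
    unfolding param_pnorm_pow_def
  proof (rule sum_mono)
    fix l assume l: "l \<in> {..<depth a}"
    have "(\<Sum>i<a ! (l+1). \<Sum>j<a ! l. \<bar>fst (\<theta> ! l) i j\<bar> powr p) \<le> (\<Sum>i<a ! (l+1). \<Sum>j<a ! l. R powr p)"
      using assms(1) l by (intro sum_mono B) (auto simp: param_set_def)
    moreover have "(\<Sum>i<a ! (l+1). \<bar>snd (\<theta> ! l) i\<bar> powr p) \<le> (\<Sum>i<a ! (l+1). R powr p)"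
      using assms(1) l by (intro sum_mono B) (auto simp: param_set_def)
    ultimately show "(\<Sum>i<a ! (l+1). \<Sum>j<a ! l. \<bar>fst (\<theta> ! l) i j\<bar> powr p) + (\<Sum>i<a ! (l+1). \<bar>snd (\<theta> ! l) i\<bar> powr p)
       \<le> real (a ! (l+1) * a ! l + a ! (l+1)) * R powr p"
      by (simp add: algebra_simps)
  qed
  also have "\<dots> = real (num_params a) * R powr p"
    unfolding num_params_def sum_shift1 by (simp add: sum_distrib_right)
  finally show "param_pnorm_pow p a \<theta> \<le> real (num_params a) * R powr p" .
qed

lemma sq_expand:
  fixes a b :: "'a \<Rightarrow> real"
  assumes "integrable M (\<lambda>x. (a x)\<^sup>2)" "integrable M (\<lambda>x. a x * b x)" "integrable M (\<lambda>x. (b x)\<^sup>2)"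
  shows "(\<integral>x. (a x - b x)\<^sup>2 \<partial>M) = (\<integral>x. (a x)\<^sup>2 \<partial>M) - 2 * (\<integral>x. a x * b x \<partial>M) + (\<integral>x. (b x)\<^sup>2 \<partial>M)"
proof -
  have "(\<integral>x. (a x - b x)\<^sup>2 \<partial>M) = (\<integral>x. ((a x)\<^sup>2 - 2 * (a x * b x)) + (b x)\<^sup>2 \<partial>M)"
    by (rule Bochner_Integration.integral_cong) (auto simp: power2_diff)
  also have "\<dots> = (\<integral>x. (a x)\<^sup>2 - 2 * (a x * b x) \<partial>M) + (\<integral>x. (b x)\<^sup>2 \<partial>M)"
    using assms by (intro Bochner_Integration.integral_add) auto
  also have "(\<integral>x. (a x)\<^sup>2 - 2 * (a x * b x) \<partial>M) = (\<integral>x. (a x)\<^sup>2 \<partial>M) - (\<integral>x. 2 * (a x * b x) \<partial>M)"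
    using assms by (intro Bochner_Integration.integral_diff) auto
  finally show ?thesis by simp
qed

lemma Linf_AE:
  assumes "Linf_dist M f g < ereal t"
  shows "AE x in M. \<bar>f x - g x\<bar> \<le> t"
  using esssup_AE[of "\<lambda>x. ereal \<bar>f x - g x\<bar>" M]
proof eventually_elim
  case (elim x)
  then have "ereal \<bar>f x - g x\<bar> < ereal t" using assms unfolding Linf_dist_def by (meson order.strict_trans1)
  then show ?case by simp
qed

theorem lemma9:
  fixes \<rho> :: "((nat \<Rightarrow> real) \<times> real) measure"
    and \<eta> :: "(nat \<Rightarrow> real) \<Rightarrow> real"
    and d :: nat and a :: "nat list" and R p \<epsilon> lam :: real
    and \<theta>_lam :: "layer_param list"
  assumes prob: "prob_space \<rho>"
    and sets_rho: "sets \<rho> = sets borel"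
    and support: "AE z in \<rho>. fst z \<in> cube d \<and> snd z \<in> {-1, 1}"
    and eta: "is_regression_fun \<rho> \<eta>"
    and p_pos: "0 < p"
    and arch: "is_architecture d a"
    and R_pos: "R > 0"
    and eps: "\<epsilon> \<ge> 0"
    and approx: "(INF f \<in> NN a (width a) (depth a) R. Linf_dist (marginal \<rho>) f \<eta>) \<le> ereal \<epsilon>"
    and lam: "lam \<ge> 0"
    and min_mem: "\<theta>_lam \<in> param_set a R"
    and minimizer: "\<forall>\<theta> \<in> param_set a R. reg_risk \<rho> p lam a \<theta>_lam \<le> reg_risk \<rho> p lam a \<theta>"
  shows "L2_dist (marginal \<rho>) (realization a \<theta>_lam) \<eta>
           \<le> \<epsilon> + sqrt (lam / 2 * real (num_params a) * R powr p)"
proof -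
  define M where "M = marginal \<rho>"
  have M: "M = distr \<rho> borel fst" unfolding M_def marginal_def ..
  have fm[measurable]: "fst \<in> \<rho> \<rightarrow>\<^sub>M borel" and sm[measurable]: "snd \<in> borel_measurable \<rho>"
    using fst_snd_meas[OF sets_rho] by auto
  interpret P: prob_space \<rho> by (rule prob)
  interpret PM: prob_space M unfolding M by (rule P.prob_space_distr) simp
  have etam[measurable]: "\<eta> \<in> borel_measurable borel" using eta unfolding is_regression_fun_def by simp
  have etaM[measurable]: "\<eta> \<in> borel_measurable M" unfolding M by simp
  have cond: "\<forall>A \<in> sets borel. (\<integral>z. indicator A (fst z) * snd z \<partial>\<rho>)
                       = (\<integral>x. indicator A x * \<eta> x \<partial>distr \<rho> borel fst)"
    using eta unfolding is_regression_fun_def marginal_def by simp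
  have Y: "AE z in \<rho>. \<bar>snd z\<bar> \<le> 1" using support by eventually_elim auto
  have Y2: "AE z in \<rho>. norm ((snd z)\<^sup>2) \<le> 1" using support by eventually_elim auto
  have INFeq: "(INF f \<in> NN a (width a) (depth a) R. Linf_dist M f \<eta>)
      = (INF \<theta> \<in> param_set a R. Linf_dist M (realization a \<theta>) \<eta>)"
    unfolding NN_def M_def by (simp add: image_image)
  have ex: "\<exists>\<theta>\<in>param_set a R. Linf_dist M (realization a \<theta>) \<eta> < ereal (\<epsilon> + e)" if "e > 0" for e
  proof -
    have "(INF \<theta> \<in> param_set a R. Linf_dist M (realization a \<theta>) \<eta>) < ereal (\<epsilon> + e)"
    proof -
      have "ereal \<epsilon> < ereal (\<epsilon> + e)" using that by simp
      from order.strict_trans1[OF approx this] show ?thesis using INFeq unfolding M_def by simp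
    qed
    then show ?thesis by (simp add: INF_less_iff)
  qed
  obtain \<theta>0 where "Linf_dist M (realization a \<theta>0) \<eta> < ereal (\<epsilon> + 1)" using ex[of 1] by auto
  then have "AE x in M. \<bar>realization a \<theta>0 x - \<eta> x\<bar> \<le> \<epsilon> + 1" by (rule Linf_AE)
  then have etab: "AE x in M. \<bar>\<eta> x\<bar> \<le> \<epsilon> + 2"
  proof eventually_elim
    case (elim x)
    then show ?case using realization_bnd[of a \<theta>0 x] by linarith
  qed
  have etab2: "AE x in M. norm ((\<eta> x)\<^sup>2) \<le> (\<epsilon> + 2)\<^sup>2" using etab
  proof eventually_elim
    case (elim x) then show ?case by (simp, metis abs_ge_zero power2_abs power_mono)
  qed
  have inteta2: "integrable M (\<lambda>x. (\<eta> x)\<^sup>2)" by (rule PM.integrable_const_bound[OF etab2]) simp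
  have intY2: "integrable \<rho> (\<lambda>z. (snd z)\<^sup>2)" by (rule P.integrable_const_bound[OF Y2]) simp
  define K where "K = (\<integral>z. (snd z)\<^sup>2 \<partial>\<rho>) - (\<integral>x. (\<eta> x)\<^sup>2 \<partial>M)"
  define G where "G \<theta> = (\<integral>x. (realization a \<theta> x - \<eta> x)\<^sup>2 \<partial>M)" for \<theta>
  have decomp: "(\<integral>z. (realization a \<theta> (fst z) - snd z)\<^sup>2 \<partial>\<rho>) = G \<theta> + K" for \<theta>
  proof -
    let ?f = "realization a \<theta>"
    have fmeas[measurable]: "?f \<in> borel_measurable borel" by (rule realization_meas)
    have fM[measurable]: "?f \<in> borel_measurable M" unfolding M by simp
    have fr[measurable]: "(\<lambda>z. ?f (fst z)) \<in> borel_measurable \<rho>" by measurable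
    have fb: "norm (?f x) \<le> 1" for x using realization_bnd by simp
    have f2b: "norm ((?f x)\<^sup>2) \<le> 1" for x using realization_bnd[of a \<theta> x] by (simp add: abs_square_le_1)
    have intfM: "integrable M ?f" by (rule PM.integrable_const_bound[of _ 1]) (use fb in auto)
    have intf2M: "integrable M (\<lambda>x. (?f x)\<^sup>2)" by (rule PM.integrable_const_bound[of _ 1]) (use f2b in auto)
    have intf2r: "integrable \<rho> (\<lambda>z. (?f (fst z))\<^sup>2)" by (rule P.integrable_const_bound[of _ 1]) (use f2b in auto)
    have intfYr: "integrable \<rho> (\<lambda>z. ?f (fst z) * snd z)"
      by (rule integrable_mult_AE_bdd[OF _ sm Y], rule P.integrable_const_bound[of _ 1]) (use fb in auto)
    have intfeM: "integrable M (\<lambda>x. ?f x * \<eta> x)" by (rule integrable_mult_AE_bdd[OF intfM etaM etab])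
    have k: "(\<integral>z. ?f (fst z) * snd z \<partial>\<rho>) = (\<integral>x. ?f x * \<eta> x \<partial>M)"
      unfolding M by (rule key[OF sets_rho Y etam etab[unfolded M] cond intfM[unfolded M]])
    have d: "(\<integral>z. (?f (fst z))\<^sup>2 \<partial>\<rho>) = (\<integral>x. (?f x)\<^sup>2 \<partial>M)"
      unfolding M by (rule integral_distr[symmetric]) auto
    show ?thesis
      unfolding G_def K_def sq_expand[OF intf2r intfYr intY2] sq_expand[OF intf2M intfeM inteta2] k d
      by simp
  qed
  have Gnn: "G \<theta> \<le> t\<^sup>2" if "Linf_dist M (realization a \<theta>) \<eta> < ereal t" for \<theta> t
  proof -
    have "AE x in M. \<bar>realization a \<theta> x - \<eta> x\<bar> \<le> t" using that by (rule Linf_AE)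
    then have ae: "AE x in M. (realization a \<theta> x - \<eta> x)\<^sup>2 \<le> t\<^sup>2"
      by eventually_elim (metis abs_ge_zero power2_abs power_mono)
    have "AE x in M. norm ((realization a \<theta> x - \<eta> x)\<^sup>2) \<le> t\<^sup>2" using ae by eventually_elim simp
    then have "integrable M (\<lambda>x. (realization a \<theta> x - \<eta> x)\<^sup>2)"
    proof (rule PM.integrable_const_bound)
      have [measurable]: "realization a \<theta> \<in> borel_measurable borel" by (rule realization_meas)
      show "(\<lambda>x. (realization a \<theta> x - \<eta> x)\<^sup>2) \<in> borel_measurable M" unfolding M by measurable
    qed
    then have "G \<theta> \<le> (\<integral>x. t\<^sup>2 \<partial>M)" unfolding G_def
      using ae by (intro integral_mono_AE) auto
    then show ?thesis by (simp add: PM.prob_space)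
  qed
  define Q where "Q = lam / 2 * real (num_params a) * R powr p"
  have Q0: "Q \<ge> 0" unfolding Q_def using lam by simp
  have main: "G \<theta>_lam \<le> G \<theta> + Q" if th: "\<theta> \<in> param_set a R" for \<theta>
  proof -
    have "G \<theta>_lam + K + lam / 2 * param_pnorm_pow p a \<theta>_lam \<le> G \<theta> + K + lam / 2 * param_pnorm_pow p a \<theta>"
      using minimizer th unfolding reg_risk_def decomp by auto
    moreover have "lam / 2 * param_pnorm_pow p a \<theta>_lam \<ge> 0"
      using pnorm_bounds(1)[OF min_mem p_pos] lam by simp
    moreover have "lam / 2 * param_pnorm_pow p a \<theta> \<le> Q"
      unfolding Q_def using pnorm_bounds(2)[OF th p_pos] lam
      by (simp add: mult.assoc mult_left_mono)
    ultimately show ?thesis by linarith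
  qed
  have "L2_dist M (realization a \<theta>_lam) \<eta> \<le> \<epsilon> + sqrt Q"
  proof (rule field_le_epsilon)
    fix e :: real assume e: "e > 0"
    obtain \<theta> where th: "\<theta> \<in> param_set a R" "Linf_dist M (realization a \<theta>) \<eta> < ereal (\<epsilon> + e)"
      using ex[OF e] by blast
    have "G \<theta>_lam \<le> (\<epsilon> + e)\<^sup>2 + Q" using main[OF th(1)] Gnn[OF th(2)] by simp
    then have "sqrt (G \<theta>_lam) \<le> sqrt ((\<epsilon> + e)\<^sup>2 + Q)" by simp
    also have "\<dots> \<le> sqrt ((\<epsilon> + e)\<^sup>2) + sqrt Q" using Q0 by (intro sqrt_add_le_add_sqrt) auto
    also have "\<dots> = \<epsilon> + e + sqrt Q" using eps e by simp
    finally show "L2_dist M (realization a \<theta>_lam) \<eta> \<le> \<epsilon> + sqrt Q + e"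
      unfolding L2_dist_def G_def by simp
  qed
  then show ?thesis unfolding M_def Q_def .
qed

end
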